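(* Let $S\subseteq N$ with $|S|=k\ge2$ and suppose that for all $v\in S$ and all distinct $i,j\in N$, $$\frac{\partial^2(-\log p_{v,S}(\theta))}{\partial\theta_i\partial\theta_j}\Big|_{\theta=\mathbf 0}\le0.$$ Then for every $y\in S$, $$\big\|\nabla^2(-\log p_{y,S}(\theta))|_{\theta=\mathbf 0}\big\|_2\le k^4\Big(\frac{\partial p_k(\mathbf 0)}{\partial x_1}\Big)^2.$$
   Context: $F$ is a CDF of a zero-mean random variable with continuously differentiable density $f$, $f(x)\to0$ as $|x|\to\infty$, with differentiation under the integral sign permitted. $p_k(x)=\int_{\mathbb R}\prod_{v=1}^{k-1}F(x_v+z)f(z)dz$ for $x\in\mathbb R^{k-1}$; $p_{y,S}(\theta)=p_k((\theta_y-\theta_u)_{u\in S\setminus\{y\}})$ for $\theta\in\mathbb R^n$; $\frac{\partial p_k(\mathbf 0)}{\partial x_1}=\int f(z)^2F(z)^{k-2}dz$. $\|\cdot\|_2$ is the spectral norm. *)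

theory Defs
  imports "HOL-Analysis.Analysis"
begin

text \<open>Standing assumptions on the distribution: \<open>f\<close> is a continuously differentiable
  probability density (derivative \<open>f'\<close>) of a zero-mean random variable with CDF \<open>F\<close>,
  \<open>f(x) \<to> 0\<close> as \<open>|x| \<to> \<infinity>\<close>, and differentiation under the integral sign is
  permitted (rendered as a local domination condition on the derivative terms).\<close>
definition std_assumptions ::
  "(real \<Rightarrow> real) \<Rightarrow> (real \<Rightarrow> real) \<Rightarrow> (real \<Rightarrow> real) \<Rightarrow> bool" where
  "std_assumptions F f f' \<longleftrightarrow>
     (\<forall>x. f x \<ge> 0) \<and> integrable lborel f \<and> (LINT z|lborel. f z) = 1 \<and>
     (\<forall>x. F x = (LINT z:{..x}|lborel. f z)) \<and>
     integrable lborel (\<lambda>z. z * f z) \<and> (LINT z|lborel. z * f z) = 0 \<and>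
     (\<forall>x. (f has_real_derivative f' x) (at x)) \<and> continuous_on UNIV f' \<and>
     (f \<longlongrightarrow> 0) at_top \<and> (f \<longlongrightarrow> 0) at_bot \<and>
     (\<exists>\<delta>>0. \<exists>h. integrable lborel h \<and>
        (\<forall>t z. \<bar>t\<bar> \<le> \<delta> \<longrightarrow> \<bar>f' (t + z)\<bar> * f z \<le> h z))"

definition pk :: "(real \<Rightarrow> real) \<Rightarrow> (real \<Rightarrow> real) \<Rightarrow> nat \<Rightarrow> (nat \<Rightarrow> real) \<Rightarrow> real" where
  "pk F f k x = (LINT z|lborel. (\<Prod>v\<in>{1..k-1}. F (x v + z)) * f z)"

definition dpk0 :: "(real \<Rightarrow> real) \<Rightarrow> (real \<Rightarrow> real) \<Rightarrow> nat \<Rightarrow> real" where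
  "dpk0 F f k = deriv (\<lambda>t. pk F f k (\<lambda>v. if v = 1 then t else 0)) 0"

text \<open>\<open>p_{y,S}(\<theta>) = p_k((\<theta>_y - \<theta>_u)_{u \<in> S - {y}})\<close>; \<open>p_k\<close> is symmetric in its
  arguments, so the enumeration of \<open>S - {y}\<close> is immaterial and we write the product directly.\<close>
definition pyS :: "(real \<Rightarrow> real) \<Rightarrow> (real \<Rightarrow> real) \<Rightarrow> 'n set \<Rightarrow> 'n \<Rightarrow> real^'n \<Rightarrow> real" where
  "pyS F f S y \<theta> = (LINT z|lborel. (\<Prod>u\<in>S - {y}. F (\<theta>$y - \<theta>$u + z)) * f z)"

definition partial_deriv :: "'n::finite \<Rightarrow> (real^'n \<Rightarrow> real) \<Rightarrow> real^'n \<Rightarrow> real" where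
  "partial_deriv i g \<theta> = deriv (\<lambda>t. g (\<theta> + t *\<^sub>R axis i 1)) 0"

definition hessian :: "(real^'n::finite \<Rightarrow> real) \<Rightarrow> real^'n \<Rightarrow> real^'n^'n" where
  "hessian g \<theta> = (\<chi> i j. partial_deriv i (partial_deriv j g) \<theta>)"

definition spec_norm :: "real^'n::finite^'m::finite \<Rightarrow> real" where
  "spec_norm A = onorm (\<lambda>x. A *v x)"

end

theory Submission
  imports Defs
begin


lemma mvt_bound:
  fixes g g' :: "real \<Rightarrow> real"
  assumes der: "\<And>t. \<bar>t - t0\<bar> < r \<Longrightarrow> (g has_real_derivative g' t) (at t)"
    and bnd: "\<And>t. \<bar>t - t0\<bar> < r \<Longrightarrow> \<bar>g' t\<bar> \<le> H"
    and x: "\<bar>x - t0\<bar> < r"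
  shows "\<bar>g x - g t0\<bar> \<le> H * \<bar>x - t0\<bar>"
proof (cases x t0 rule: linorder_cases)
  case less
  then obtain z where z: "x < z" "z < t0" "g t0 - g x = (t0 - x) * g' z"
    using MVT2[of x t0 g g'] der x by force
  have "\<bar>z - t0\<bar> < r" using z x less by auto
  then have "\<bar>g' z\<bar> \<le> H" by (rule bnd)
  then show ?thesis using z less
    by (simp add: abs_mult abs_minus_commute mult.commute mult_left_mono)
next
  case greater
  then obtain z where z: "t0 < z" "z < x" "g x - g t0 = (x - t0) * g' z"
    using MVT2[of t0 x g g'] der x by force
  have "\<bar>z - t0\<bar> < r" using z x greater by auto
  then have "\<bar>g' z\<bar> \<le> H" by (rule bnd)
  then show ?thesis using z greater
    by (simp add: abs_mult mult.commute mult_left_mono)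
qed simp

lemma diff_under_integral:
  fixes \<phi> \<phi>' :: "real \<Rightarrow> real \<Rightarrow> real" and h :: "real \<Rightarrow> real"
  assumes r: "r > 0"
    and der: "\<And>t z. \<bar>t - t0\<bar> < r \<Longrightarrow> ((\<lambda>t. \<phi> t z) has_real_derivative \<phi>' t z) (at t)"
    and int: "\<And>t. \<bar>t - t0\<bar> < r \<Longrightarrow> integrable lborel (\<phi> t)"
    and meas: "\<phi>' t0 \<in> borel_measurable lborel"
    and hint: "integrable lborel h"
    and bnd: "\<And>t z. \<bar>t - t0\<bar> < r \<Longrightarrow> \<bar>\<phi>' t z\<bar> \<le> h z"
  shows "((\<lambda>t. LINT z|lborel. \<phi> t z) has_real_derivative (LINT z|lborel. \<phi>' t0 z)) (at t0)"
  unfolding has_field_derivative_iff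
proof (subst tendsto_at_iff_sequentially, intro allI impI)
  fix X :: "nat \<Rightarrow> real"
  assume X: "\<forall>i. X i \<in> UNIV - {t0}" and Xl: "X \<longlonglongrightarrow> t0"
  then have Xne: "\<And>i. X i \<noteq> t0" by auto
  have "eventually (\<lambda>n. dist (X n) t0 < r) sequentially"
    using Xl r by (simp add: tendsto_iff)
  then obtain N where N: "\<And>n. n \<ge> N \<Longrightarrow> \<bar>X n - t0\<bar> < r"
    by (auto simp: eventually_sequentially dist_real_def)
  define s where "s n z = (\<phi> (X (n + N)) z - \<phi> t0 z) / (X (n + N) - t0)" for n z
  have XN: "\<bar>X (n + N) - t0\<bar> < r" for n using N by simp
  have int0: "integrable lborel (\<phi> t0)" using int r by simp
  have sm: "s n \<in> borel_measurable lborel" for n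
    unfolding s_def using int[OF XN[of n]] int0 by measurable
  have lim: "AE z in lborel. (\<lambda>n. s n z) \<longlonglongrightarrow> \<phi>' t0 z"
  proof (rule AE_I2)
    fix z
    have "((\<lambda>t. (\<phi> t z - \<phi> t0 z) / (t - t0)) \<longlongrightarrow> \<phi>' t0 z) (at t0)"
      using der[of t0 z] r by (simp add: has_field_derivative_iff)
    moreover have "(\<lambda>n. X (n + N)) \<longlonglongrightarrow> t0"
      using Xl by (rule LIMSEQ_ignore_initial_segment)
    ultimately show "(\<lambda>n. s n z) \<longlonglongrightarrow> \<phi>' t0 z"
      unfolding s_def using Xne
      by (subst (asm) tendsto_at_iff_sequentially) (auto simp: comp_def)
  qed
  have bound: "AE z in lborel. norm (s n z) \<le> h z" for n
  proof (rule AE_I2)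
    fix z
    have "\<bar>\<phi> (X (n + N)) z - \<phi> t0 z\<bar> \<le> h z * \<bar>X (n + N) - t0\<bar>"
      by (rule mvt_bound[where r=r and g'="\<lambda>t. \<phi>' t z"]) (auto intro: der bnd XN)
    then show "norm (s n z) \<le> h z"
      using Xne[of "n+N"] by (simp add: s_def abs_divide divide_le_eq)
  qed
  have "(\<lambda>n. LINT z|lborel. s n z) \<longlonglongrightarrow> (LINT z|lborel. \<phi>' t0 z)"
    by (rule integral_dominated_convergence[OF meas sm hint lim bound])
  moreover have "(LINT z|lborel. s n z) =
      ((LINT z|lborel. \<phi> (X (n + N)) z) - (LINT z|lborel. \<phi> t0 z)) / (X (n + N) - t0)" for n
    unfolding s_def using int[OF XN[of n]] int0 by simp
  ultimately have "(\<lambda>n. ((LINT z|lborel. \<phi> (X (n + N)) z) - (LINT z|lborel. \<phi> t0 z)) / (X (n + N) - t0))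
     \<longlonglongrightarrow> (LINT z|lborel. \<phi>' t0 z)" by simp
  then show "((\<lambda>y. ((LINT z|lborel. \<phi> y z) - (LINT z|lborel. \<phi> t0 z)) / (y - t0)) \<circ> X)
     \<longlonglongrightarrow> (LINT z|lborel. \<phi>' t0 z)"
    unfolding comp_def by (rule LIMSEQ_offset[where k=N])
qed




locale stdF =
  fixes F f f' :: "real \<Rightarrow> real"
  assumes std: "std_assumptions F f f'"
begin

lemma f_nonneg: "f x \<ge> 0" using std by (simp add: std_assumptions_def)
lemma f_int: "integrable lborel f" using std by (simp add: std_assumptions_def)
lemma f_int1: "(LINT z|lborel. f z) = 1" using std by (simp add: std_assumptions_def)
lemma F_def': "F x = (LINT z:{..x}|lborel. f z)" using std by (simp add: std_assumptions_def)
lemma f_deriv: "(f has_real_derivative f' x) (at x)" using std by (simp add: std_assumptions_def)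
lemma f'_cont: "continuous_on UNIV f'" using std by (simp add: std_assumptions_def)
lemma f_top: "(f \<longlongrightarrow> 0) at_top" using std by (simp add: std_assumptions_def)
lemma f_bot: "(f \<longlongrightarrow> 0) at_bot" using std by (simp add: std_assumptions_def)
lemma dom: "\<exists>\<delta>>0. \<exists>h. integrable lborel h \<and> (\<forall>t z. \<bar>t\<bar> \<le> \<delta> \<longrightarrow> \<bar>f' (t + z)\<bar> * f z \<le> h z)"
  using std by (simp add: std_assumptions_def)

lemma f_cont: "continuous_on UNIV f"
  using f_deriv by (meson DERIV_isCont continuous_at_imp_continuous_on)

lemma f_meas[measurable]: "f \<in> borel_measurable borel"
  using f_cont by (rule borel_measurable_continuous_onI)
lemma f'_meas[measurable]: "f' \<in> borel_measurable borel"
  using f'_cont by (rule borel_measurable_continuous_onI)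

lemma f_bounded: "\<exists>M>0. \<forall>x. f x \<le> M"
proof -
  have "eventually (\<lambda>x. dist (f x) 0 < 1) at_top" using f_top by (simp add: tendsto_iff)
  then obtain R1 where R1: "\<And>x. x \<ge> R1 \<Longrightarrow> \<bar>f x\<bar> < 1"
    by (auto simp: eventually_at_top_linorder dist_real_def)
  have "eventually (\<lambda>x. dist (f x) 0 < 1) at_bot" using f_bot by (simp add: tendsto_iff)
  then obtain R2 where R2: "\<And>x. x \<le> R2 \<Longrightarrow> \<bar>f x\<bar> < 1"
    by (auto simp: eventually_at_bot_linorder dist_real_def)
  have "compact (f ` {R2..R1})"
    by (rule compact_continuous_image) (auto intro: continuous_on_subset[OF f_cont])
  then obtain B where B: "\<And>x. x \<in> {R2..R1} \<Longrightarrow> \<bar>f x\<bar> \<le> B"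
    by (meson compact_imp_bounded bounded_real image_eqI)
  show ?thesis
  proof (intro exI[of _ "max 1 B"] conjI allI)
    fix x
    show "f x \<le> max 1 B"
      using R1[of x] R2[of x] B[of x] by (cases "x \<ge> R1"; cases "x \<le> R2") auto
  qed simp
qed

lemma f_seti: "set_integrable lborel A f" if "A \<in> sets borel"
  using set_integrable_subset[of lborel UNIV f A] f_int that
  by (simp add: set_integrable_def)

lemma F_split: "F x = F c + (LBINT y=c..x. f y)"
proof (cases "c \<le> x")
  case True
  have "{..x} = {..c} \<union> {c<..x}" using True by auto
  then have "F x = F c + (LBINT y:{c<..x}. f y)"
    unfolding F_def' by (simp, subst set_integral_Un) (auto intro: f_seti)
  then show ?thesis using True by (simp add: interval_integral_Ioc)
next
  case False
  have "{..c} = {..x} \<union> {x<..c}" using False by auto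
  then have "F c = F x + (LBINT y:{x<..c}. f y)"
    unfolding F_def' by (simp, subst set_integral_Un) (auto intro: f_seti)
  moreover have "(LBINT y=c..x. f y) = - (LBINT y=x..c. f y)"
    by (rule interval_integral_endpoints_reverse)
  ultimately show ?thesis using False
    by (simp add: interval_integral_Ioc)
qed

lemma F_deriv: "(F has_real_derivative f x) (at x)"
proof -
  have "((\<lambda>u. LBINT y=x..u. f y) has_vector_derivative (f x)) (at x within {x-1..x+1})"
    by (rule interval_integral_FTC2) (auto intro: continuous_on_subset[OF f_cont])
  then have "((\<lambda>u. LBINT y=x..u. f y) has_real_derivative (f x)) (at x)"
    by (simp add: at_within_Icc_at has_real_derivative_iff_has_vector_derivative)
  then have "((\<lambda>u. F x + (LBINT y=x..u. f y)) has_real_derivative (f x)) (at x)"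
    by (auto intro!: derivative_eq_intros)
  moreover have "(\<lambda>u. F x + (LBINT y=x..u. f y)) = F"
    by (rule ext) (rule F_split[symmetric])
  ultimately show ?thesis by simp
qed

lemma F_cont: "continuous_on UNIV F"
  using F_deriv by (meson DERIV_isCont continuous_at_imp_continuous_on)
lemma F_meas[measurable]: "F \<in> borel_measurable borel"
  using F_cont by (rule borel_measurable_continuous_onI)

lemma F_nonneg: "F x \<ge> 0"
  unfolding F_def' set_lebesgue_integral_def
  by (rule integral_nonneg_AE) (auto simp: f_nonneg)

lemma F_le1: "F x \<le> 1"
proof -
  have "F x \<le> (LINT z|lborel. f z)"
    unfolding F_def' set_lebesgue_integral_def
    by (rule integral_mono[OF f_seti[of "{..x}", unfolded set_integrable_def] f_int])
       (auto simp: f_nonneg indicator_def)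
  then show ?thesis using f_int1 by simp
qed

lemma F_top: "(F \<longlongrightarrow> 1) at_top"
proof -
  have "((\<lambda>t. LINT z|lborel. indicator {..t} z *\<^sub>R f z) \<longlongrightarrow> (LINT z|lborel. f z)) at_top"
  proof (rule integral_dominated_convergence_at_top[where w=f])
    show "AE z in lborel. ((\<lambda>t. indicator {..t} z *\<^sub>R f z) \<longlongrightarrow> f z) at_top"
    proof (rule AE_I2, rule tendsto_eventually)
      fix z show "\<forall>\<^sub>F t in at_top. indicator {..t} z *\<^sub>R f z = f z"
        by (rule eventually_at_top_linorderI[of z]) simp
    qed
    show "\<forall>\<^sub>F i in at_top. AE x in lborel. norm (indicator {..i} x *\<^sub>R f x) \<le> f x"
      by (auto simp: indicator_def f_nonneg)
  qed (auto simp: f_int)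
  moreover have "F = (\<lambda>t. LINT z|lborel. indicator {..t} z *\<^sub>R f z)"
    by (rule ext) (simp add: F_def' set_lebesgue_integral_def)
  ultimately show ?thesis using f_int1 by simp
qed

lemma F_bot: "(F \<longlongrightarrow> 0) at_bot"
proof -
  have "((\<lambda>t. LINT z|lborel. indicator {..-t} z *\<^sub>R f z) \<longlongrightarrow> (LINT z|lborel. 0 * f z)) at_top"
  proof (rule integral_dominated_convergence_at_top[where w=f])
    show "AE z in lborel. ((\<lambda>t. indicator {..-t} z *\<^sub>R f z) \<longlongrightarrow> 0 * f z) at_top"
    proof (rule AE_I2, rule tendsto_eventually)
      fix z show "\<forall>\<^sub>F t in at_top. indicator {..-t} z *\<^sub>R f z = 0 * f z"
        by (rule eventually_at_top_linorderI[of "-z+1"]) simp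
    qed
    show "\<forall>\<^sub>F i in at_top. AE x in lborel. norm (indicator {..-i} x *\<^sub>R f x) \<le> f x"
      by (auto simp: indicator_def f_nonneg)
  qed (auto simp: f_int)
  moreover have "(\<lambda>t. F (-t)) = (\<lambda>t. LINT z|lborel. indicator {..-t} z *\<^sub>R f z)"
    by (rule ext) (simp add: F_def' set_lebesgue_integral_def)
  ultimately show ?thesis by (simp add: filterlim_at_bot_mirror)
qed

end



context stdF begin

definition Mf where "Mf = (SOME M. M > 0 \<and> (\<forall>x. f x \<le> M))"
lemma Mf: "Mf > 0" "f x \<le> Mf"
  using someI_ex[OF f_bounded] unfolding Mf_def by auto

lemma prodF_bounds: "0 \<le> (\<Prod>u\<in>A. F (g u))" "(\<Prod>u\<in>A. F (g u)) \<le> 1"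
  by (auto intro!: prod_nonneg prod_le_1 simp: F_nonneg F_le1)

lemma abs_prodF: "\<bar>\<Prod>u\<in>A. F (g u)\<bar> \<le> 1"
  using prodF_bounds[of g A] by simp

lemma intQ: "integrable lborel (\<lambda>z. (\<Prod>u\<in>U. F (g u z)) * f z)"
  if [measurable]: "\<And>u. g u \<in> borel_measurable borel" "finite U"
proof (rule Bochner_Integration.integrable_bound[OF f_int])
  show "(\<lambda>z. (\<Prod>u\<in>U. F (g u z)) * f z) \<in> borel_measurable lborel" by measurable
  show "AE z in lborel. norm ((\<Prod>u\<in>U. F (g u z)) * f z) \<le> norm (f z)"
  proof (rule AE_I2)
    fix z show "norm ((\<Prod>u\<in>U. F (g u z)) * f z) \<le> norm (f z)"
      using mult_left_le_one_le[OF f_nonneg[of z] abs_ge_zero abs_prodF[of "\<lambda>u. g u z" U]]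
      by (simp add: abs_mult f_nonneg)
  qed
qed

lemma D1:
  fixes U :: "'a set" and c \<beta> :: "'a \<Rightarrow> real"
  assumes U: "finite U"
  shows "((\<lambda>t. LINT z|lborel. (\<Prod>u\<in>U. F (c u + \<beta> u * t + z)) * f z) has_real_derivative
     (LINT z|lborel. (\<Sum>u\<in>U. f (c u + \<beta> u * t0 + z) * \<beta> u *
         (\<Prod>v\<in>U-{u}. F (c v + \<beta> v * t0 + z))) * f z)) (at t0)"
proof (rule diff_under_integral[where r=1 and h="\<lambda>z. (\<Sum>u\<in>U. \<bar>\<beta> u\<bar>) * Mf * f z"])
  fix t z
  have "((\<lambda>t. \<Prod>u\<in>U. F (c u + \<beta> u * t + z)) has_real_derivative
     (\<Sum>u\<in>U. f (c u + \<beta> u * t + z) * \<beta> u * (\<Prod>v\<in>U-{u}. F (c v + \<beta> v * t + z)))) (at t)"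
  proof (rule has_field_derivative_prod)
    fix u
    show "((\<lambda>t. F (c u + \<beta> u * t + z)) has_real_derivative f (c u + \<beta> u * t + z) * \<beta> u) (at t)"
      by (rule DERIV_chain2[OF F_deriv]) (auto intro!: derivative_eq_intros)
  qed
  then show "((\<lambda>t. (\<Prod>u\<in>U. F (c u + \<beta> u * t + z)) * f z) has_real_derivative
     (\<Sum>u\<in>U. f (c u + \<beta> u * t + z) * \<beta> u * (\<Prod>v\<in>U-{u}. F (c v + \<beta> v * t + z))) * f z) (at t)"
    by (rule DERIV_cmult_right)
next
  fix t
  show "integrable lborel (\<lambda>z. (\<Prod>u\<in>U. F (c u + \<beta> u * t + z)) * f z)"
    by (rule intQ) (auto simp: U)
next
  show "(\<lambda>z. (\<Sum>u\<in>U. f (c u + \<beta> u * t0 + z) * \<beta> u *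
         (\<Prod>v\<in>U-{u}. F (c v + \<beta> v * t0 + z))) * f z) \<in> borel_measurable lborel"
    by measurable
next
  show "integrable lborel (\<lambda>z. (\<Sum>u\<in>U. \<bar>\<beta> u\<bar>) * Mf * f z)"
    using f_int by simp
next
  fix t z
  have "\<bar>\<Sum>u\<in>U. f (c u + \<beta> u * t + z) * \<beta> u * (\<Prod>v\<in>U-{u}. F (c v + \<beta> v * t + z))\<bar>
     \<le> (\<Sum>u\<in>U. \<bar>\<beta> u\<bar> * Mf)"
  proof (rule order_trans[OF sum_abs], rule sum_mono)
    fix u
    have "\<bar>f (c u + \<beta> u * t + z) * \<beta> u * (\<Prod>v\<in>U-{u}. F (c v + \<beta> v * t + z))\<bar>
        = f (c u + \<beta> u * t + z) * \<bar>\<beta> u\<bar> * \<bar>\<Prod>v\<in>U-{u}. F (c v + \<beta> v * t + z)\<bar>"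
      by (simp add: abs_mult f_nonneg)
    also have "\<dots> \<le> Mf * \<bar>\<beta> u\<bar> * 1"
      using Mf(1) by (intro mult_mono abs_prodF Mf) (auto simp: f_nonneg)
    finally show "\<bar>f (c u + \<beta> u * t + z) * \<beta> u * (\<Prod>v\<in>U-{u}. F (c v + \<beta> v * t + z))\<bar>
        \<le> \<bar>\<beta> u\<bar> * Mf" by (simp add: mult.commute)
  qed
  then have "\<bar>(\<Sum>u\<in>U. f (c u + \<beta> u * t + z) * \<beta> u * (\<Prod>v\<in>U-{u}. F (c v + \<beta> v * t + z)))\<bar> * f z
      \<le> (\<Sum>u\<in>U. \<bar>\<beta> u\<bar> * Mf) * f z"
    by (rule mult_right_mono) (rule f_nonneg)
  then show "\<bar>(\<Sum>u\<in>U. f (c u + \<beta> u * t + z) * \<beta> u * (\<Prod>v\<in>U-{u}. F (c v + \<beta> v * t + z))) * f z\<bar>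
      \<le> (\<Sum>u\<in>U. \<bar>\<beta> u\<bar>) * Mf * f z"
  proof -
    have e1: "\<bar>(\<Sum>u\<in>U. f (c u + \<beta> u * t + z) * \<beta> u * (\<Prod>v\<in>U-{u}. F (c v + \<beta> v * t + z))) * f z\<bar>
      = \<bar>(\<Sum>u\<in>U. f (c u + \<beta> u * t + z) * \<beta> u * (\<Prod>v\<in>U-{u}. F (c v + \<beta> v * t + z)))\<bar> * f z"
      by (simp only: abs_mult abs_of_nonneg[OF f_nonneg])
    have e2: "(\<Sum>u\<in>U. \<bar>\<beta> u\<bar> * Mf) * f z = (\<Sum>u\<in>U. \<bar>\<beta> u\<bar>) * Mf * f z"
      by (simp add: sum_distrib_right)
    from e1 e2 show ?thesis using \<open>\<bar>(\<Sum>u\<in>U. _)\<bar> * f z \<le> _\<close> by linarith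
  qed
qed simp

end



context stdF begin

lemma D2:
  fixes U :: "'a set" and \<alpha> \<beta> :: "'a \<Rightarrow> real"
  assumes U: "finite U" and \<alpha>: "\<And>u. \<bar>\<alpha> u\<bar> \<le> 1" and \<delta>: "\<delta> > 0"
    and hint: "integrable lborel h" and hb: "\<And>t z. \<bar>t\<bar> \<le> \<delta> \<Longrightarrow> \<bar>f' (t + z)\<bar> * f z \<le> h z"
  shows "((\<lambda>s. LINT z|lborel. (\<Sum>u\<in>U. f (\<alpha> u * s + z) * \<beta> u * (\<Prod>v\<in>U-{u}. F (\<alpha> v * s + z))) * f z)
    has_real_derivative
     (LINT z|lborel. (\<Sum>u\<in>U. f' z * \<alpha> u * \<beta> u * (\<Prod>v\<in>U-{u}. F z) +
         f z * \<beta> u * (\<Sum>v\<in>U-{u}. f z * \<alpha> v * (\<Prod>w\<in>U-{u}-{v}. F z))) * f z)) (at 0)"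
proof -
  define P where "P s z = (\<Sum>u\<in>U. f (\<alpha> u * s + z) * \<beta> u * (\<Prod>v\<in>U-{u}. F (\<alpha> v * s + z))) * f z" for s z
  define P' where "P' s z = (\<Sum>u\<in>U. f' (\<alpha> u * s + z) * \<alpha> u * \<beta> u * (\<Prod>v\<in>U-{u}. F (\<alpha> v * s + z)) +
         f (\<alpha> u * s + z) * \<beta> u * (\<Sum>v\<in>U-{u}. f (\<alpha> v * s + z) * \<alpha> v *
            (\<Prod>w\<in>U-{u}-{v}. F (\<alpha> w * s + z)))) * f z" for s z
  have h0: "h z \<ge> 0" for z using hb[of 0 z] \<delta> f_nonneg[of z] by (smt (verit) mult_nonneg_nonneg)
  have "((\<lambda>s. LINT z|lborel. P s z) has_real_derivative (LINT z|lborel. P' 0 z)) (at 0)"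
  proof (rule diff_under_integral[where r=\<delta> and h="\<lambda>z. (\<Sum>u\<in>U. \<bar>\<beta> u\<bar>) * (h z + real (card U) * Mf * Mf * f z)"])
    fix s z
    have dF: "((\<lambda>s. F (\<alpha> v * s + z)) has_real_derivative f (\<alpha> v * s + z) * \<alpha> v) (at s)" for v
      by (rule DERIV_chain2[OF F_deriv]) (auto intro!: derivative_eq_intros)
    have df: "((\<lambda>s. f (\<alpha> v * s + z)) has_real_derivative f' (\<alpha> v * s + z) * \<alpha> v) (at s)" for v
      by (rule DERIV_chain2[OF f_deriv]) (auto intro!: derivative_eq_intros)
    have dprod: "((\<lambda>s. \<Prod>v\<in>U-{u}. F (\<alpha> v * s + z)) has_real_derivative
        (\<Sum>v\<in>U-{u}. f (\<alpha> v * s + z) * \<alpha> v * (\<Prod>w\<in>U-{u}-{v}. F (\<alpha> w * s + z)))) (at s)" for u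
      by (rule has_field_derivative_prod) (rule dF)
    have "((\<lambda>s. \<Sum>u\<in>U. f (\<alpha> u * s + z) * \<beta> u * (\<Prod>v\<in>U-{u}. F (\<alpha> v * s + z))) has_real_derivative
        (\<Sum>u\<in>U. f' (\<alpha> u * s + z) * \<alpha> u * \<beta> u * (\<Prod>v\<in>U-{u}. F (\<alpha> v * s + z)) +
         f (\<alpha> u * s + z) * \<beta> u * (\<Sum>v\<in>U-{u}. f (\<alpha> v * s + z) * \<alpha> v *
            (\<Prod>w\<in>U-{u}-{v}. F (\<alpha> w * s + z))))) (at s)"
    proof (rule DERIV_sum)
      fix u
      show "((\<lambda>s. f (\<alpha> u * s + z) * \<beta> u * (\<Prod>v\<in>U-{u}. F (\<alpha> v * s + z))) has_real_derivative
        f' (\<alpha> u * s + z) * \<alpha> u * \<beta> u * (\<Prod>v\<in>U-{u}. F (\<alpha> v * s + z)) +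
         f (\<alpha> u * s + z) * \<beta> u * (\<Sum>v\<in>U-{u}. f (\<alpha> v * s + z) * \<alpha> v *
            (\<Prod>w\<in>U-{u}-{v}. F (\<alpha> w * s + z)))) (at s)"
        using DERIV_mult[OF DERIV_cmult_right[OF df[of u], of "\<beta> u"] dprod[of u]]
        by (simp add: algebra_simps)
    qed
    then show "((\<lambda>s. P s z) has_real_derivative P' s z) (at s)"
      unfolding P_def P'_def by (rule DERIV_cmult_right)
  next
    fix s
    have "integrable lborel (\<lambda>z. (\<Sum>u\<in>U. \<bar>\<beta> u\<bar>) * Mf * f z)" using f_int by simp
    then show "integrable lborel (P s)"
    proof (rule Bochner_Integration.integrable_bound)
      show "P s \<in> borel_measurable lborel" unfolding P_def by measurable
      show "AE z in lborel. norm (P s z) \<le> norm ((\<Sum>u\<in>U. \<bar>\<beta> u\<bar>) * Mf * f z)"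
      proof (rule AE_I2)
        fix z
        have "\<bar>\<Sum>u\<in>U. f (\<alpha> u * s + z) * \<beta> u * (\<Prod>v\<in>U-{u}. F (\<alpha> v * s + z))\<bar> \<le> (\<Sum>u\<in>U. \<bar>\<beta> u\<bar> * Mf)"
        proof (rule order_trans[OF sum_abs], rule sum_mono)
          fix u
          have "\<bar>f (\<alpha> u * s + z) * \<beta> u * (\<Prod>v\<in>U-{u}. F (\<alpha> v * s + z))\<bar>
              = f (\<alpha> u * s + z) * \<bar>\<beta> u\<bar> * \<bar>\<Prod>v\<in>U-{u}. F (\<alpha> v * s + z)\<bar>"
            by (simp add: abs_mult f_nonneg)
          also have "\<dots> \<le> Mf * \<bar>\<beta> u\<bar> * 1"
            using Mf(1) by (intro mult_mono abs_prodF Mf) (auto simp: f_nonneg)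
          finally show "\<bar>f (\<alpha> u * s + z) * \<beta> u * (\<Prod>v\<in>U-{u}. F (\<alpha> v * s + z))\<bar> \<le> \<bar>\<beta> u\<bar> * Mf"
            by (simp add: mult.commute)
        qed
        then have "\<bar>\<Sum>u\<in>U. f (\<alpha> u * s + z) * \<beta> u * (\<Prod>v\<in>U-{u}. F (\<alpha> v * s + z))\<bar> * f z
           \<le> (\<Sum>u\<in>U. \<bar>\<beta> u\<bar> * Mf) * f z"
          by (rule mult_right_mono) (rule f_nonneg)
        moreover have "\<bar>P s z\<bar> = \<bar>\<Sum>u\<in>U. f (\<alpha> u * s + z) * \<beta> u * (\<Prod>v\<in>U-{u}. F (\<alpha> v * s + z))\<bar> * f z"
          unfolding P_def by (simp only: abs_mult abs_of_nonneg[OF f_nonneg])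
        moreover have "(\<Sum>u\<in>U. \<bar>\<beta> u\<bar> * Mf) * f z = \<bar>(\<Sum>u\<in>U. \<bar>\<beta> u\<bar>) * Mf * f z\<bar>"
          using Mf(1) by (simp add: sum_distrib_right abs_mult f_nonneg sum_nonneg)
        ultimately show "norm (P s z) \<le> norm ((\<Sum>u\<in>U. \<bar>\<beta> u\<bar>) * Mf * f z)"
          by simp
      qed
    qed
  next
    show "P' 0 \<in> borel_measurable lborel" unfolding P'_def by measurable
  next
    show "integrable lborel (\<lambda>z. (\<Sum>u\<in>U. \<bar>\<beta> u\<bar>) * (h z + real (card U) * Mf * Mf * f z))"
      using hint f_int by simp
  next
    fix s z assume s: "\<bar>s - 0\<bar> < \<delta>"
    have "\<bar>P' s z\<bar> \<le> (\<Sum>u\<in>U. \<bar>\<beta> u\<bar> * (h z + real (card U) * Mf * Mf * f z))"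
      unfolding P'_def sum_distrib_right
    proof (rule order_trans[OF sum_abs], rule sum_mono)
      fix u
      have as: "\<bar>\<alpha> u * s\<bar> \<le> \<delta>" using \<alpha>[of u] s
        by (simp add: abs_mult) (smt (verit) mult_left_le_one_le abs_ge_zero)
      have t1: "\<bar>f' (\<alpha> u * s + z) * \<alpha> u * \<beta> u * (\<Prod>v\<in>U-{u}. F (\<alpha> v * s + z)) * f z\<bar> \<le> \<bar>\<beta> u\<bar> * h z"
      proof -
        have "\<bar>f' (\<alpha> u * s + z) * \<alpha> u * \<beta> u * (\<Prod>v\<in>U-{u}. F (\<alpha> v * s + z)) * f z\<bar>
          = (\<bar>f' (\<alpha> u * s + z)\<bar> * f z) * \<bar>\<beta> u\<bar> * (\<bar>\<alpha> u\<bar> * \<bar>\<Prod>v\<in>U-{u}. F (\<alpha> v * s + z)\<bar>)"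
          by (simp add: abs_mult f_nonneg)
        also have "\<dots> \<le> h z * \<bar>\<beta> u\<bar> * 1"
          using Mf(1) by (intro mult_mono hb as mult_le_one \<alpha> abs_prodF) (auto simp: f_nonneg h0)
        finally show ?thesis by (simp add: mult.commute)
      qed
      have t2: "\<bar>f (\<alpha> u * s + z) * \<beta> u * (\<Sum>v\<in>U-{u}. f (\<alpha> v * s + z) * \<alpha> v *
            (\<Prod>w\<in>U-{u}-{v}. F (\<alpha> w * s + z))) * f z\<bar> \<le> \<bar>\<beta> u\<bar> * (real (card U) * Mf * Mf * f z)"
      proof -
        have sb: "\<bar>\<Sum>v\<in>U-{u}. f (\<alpha> v * s + z) * \<alpha> v * (\<Prod>w\<in>U-{u}-{v}. F (\<alpha> w * s + z))\<bar> \<le> real (card U) * Mf"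
        proof -
          have "\<bar>\<Sum>v\<in>U-{u}. f (\<alpha> v * s + z) * \<alpha> v * (\<Prod>w\<in>U-{u}-{v}. F (\<alpha> w * s + z))\<bar>
             \<le> (\<Sum>v\<in>U-{u}. Mf)"
          proof (rule order_trans[OF sum_abs], rule sum_mono)
            fix v
            have "\<bar>f (\<alpha> v * s + z) * \<alpha> v * (\<Prod>w\<in>U-{u}-{v}. F (\<alpha> w * s + z))\<bar>
              = f (\<alpha> v * s + z) * (\<bar>\<alpha> v\<bar> * \<bar>\<Prod>w\<in>U-{u}-{v}. F (\<alpha> w * s + z)\<bar>)"
              by (simp add: abs_mult f_nonneg)
            also have "\<dots> \<le> Mf * 1"
              using Mf(1) by (intro mult_mono Mf mult_le_one \<alpha> abs_prodF) (auto simp: f_nonneg)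
            finally show "\<bar>f (\<alpha> v * s + z) * \<alpha> v * (\<Prod>w\<in>U-{u}-{v}. F (\<alpha> w * s + z))\<bar> \<le> Mf" by (simp add: mult.commute)
          qed
          also have "\<dots> \<le> real (card U) * Mf"
            using Mf(1) U by (simp add: card_Diff_subset) (simp add: card_mono mult_right_mono)
          finally show ?thesis .
        qed
        have "\<bar>f (\<alpha> u * s + z) * \<beta> u * (\<Sum>v\<in>U-{u}. f (\<alpha> v * s + z) * \<alpha> v *
            (\<Prod>w\<in>U-{u}-{v}. F (\<alpha> w * s + z))) * f z\<bar>
          = \<bar>\<beta> u\<bar> * (f (\<alpha> u * s + z) * \<bar>\<Sum>v\<in>U-{u}. f (\<alpha> v * s + z) * \<alpha> v *
            (\<Prod>w\<in>U-{u}-{v}. F (\<alpha> w * s + z))\<bar> * f z)"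
          by (simp add: abs_mult f_nonneg)
        also have "\<dots> \<le> \<bar>\<beta> u\<bar> * (Mf * (real (card U) * Mf) * f z)"
          using Mf(1) by (intro mult_left_mono mult_right_mono mult_mono sb Mf) (auto simp: f_nonneg)
        finally show ?thesis by (simp add: algebra_simps)
      qed
      show "\<bar>(f' (\<alpha> u * s + z) * \<alpha> u * \<beta> u * (\<Prod>v\<in>U-{u}. F (\<alpha> v * s + z)) +
         f (\<alpha> u * s + z) * \<beta> u * (\<Sum>v\<in>U-{u}. f (\<alpha> v * s + z) * \<alpha> v *
            (\<Prod>w\<in>U-{u}-{v}. F (\<alpha> w * s + z)))) * f z\<bar>
         \<le> \<bar>\<beta> u\<bar> * (h z + real (card U) * Mf * Mf * f z)"
        using t1 t2 by (simp add: distrib_right distrib_left)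
    qed
    then show "\<bar>P' s z\<bar> \<le> (\<Sum>u\<in>U. \<bar>\<beta> u\<bar>) * (h z + real (card U) * Mf * Mf * f z)"
      by (simp add: sum_distrib_right)
  qed (use \<delta> in simp)
  then show ?thesis unfolding P_def P'_def by simp
qed

end



context stdF begin

lemma f_isCont: "isCont f x" using f_cont by (simp add: continuous_on_eq_continuous_at)
lemma F_isCont: "isCont F x" using F_cont by (simp add: continuous_on_eq_continuous_at)
lemma f'_isCont: "isCont f' x" using f'_cont by (simp add: continuous_on_eq_continuous_at)

lemma LBINT_UNIV: "(LBINT x=-\<infinity>..\<infinity>. g x) = (LINT x|lborel. g x)"
  by (simp add: interval_lebesgue_integral_def set_lebesgue_integral_def)

lemma I1: "(LINT z|lborel. F z ^ m * f z) = 1 / (real m + 1)"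
proof -
  have "(LBINT x=-\<infinity>..\<infinity>. F x ^ m * f x) = 1 / (real m + 1) - 0"
  proof (rule interval_integral_FTC_nonneg[where F="\<lambda>x. F x ^ Suc m / (real m + 1)"])
    fix x
    show "((\<lambda>x. F x ^ Suc m / (real m + 1)) has_real_derivative F x ^ m * f x) (at x)"
      by ((rule derivative_eq_intros refl F_deriv | simp)+, simp add: field_simps add.commute)
    show "isCont (\<lambda>x. F x ^ m * f x) x"
      by (intro continuous_intros F_isCont f_isCont)
  next
    show "AE x in lborel. - \<infinity> < ereal x \<longrightarrow> ereal x < \<infinity> \<longrightarrow> 0 \<le> F x ^ m * f x"
      by (auto simp: F_nonneg f_nonneg)
    show "(((\<lambda>x. F x ^ Suc m / (real m + 1)) \<circ> real_of_ereal) \<longlongrightarrow> 0) (at_right (- \<infinity>))"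
      unfolding ereal_tendsto_simps1
      using tendsto_divide[OF tendsto_power[OF F_bot, of "Suc m"] tendsto_const[of "real m + 1"]] by simp
    show "(((\<lambda>x. F x ^ Suc m / (real m + 1)) \<circ> real_of_ereal) \<longlongrightarrow> 1 / (real m + 1)) (at_left \<infinity>)"
      unfolding ereal_tendsto_simps1
      using tendsto_divide[OF tendsto_power[OF F_top, of "Suc m"] tendsto_const[of "real m + 1"]] by simp
  qed simp
  then show ?thesis by (simp add: LBINT_UNIV)
qed

lemma int_f'F: "integrable lborel (\<lambda>z. f' z * F z ^ n * f z)"
proof -
  obtain \<delta> h where d: "\<delta> > 0" "integrable lborel h" "\<And>t z. \<bar>t\<bar> \<le> \<delta> \<Longrightarrow> \<bar>f' (t + z)\<bar> * f z \<le> h z"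
    using dom by blast
  show ?thesis
  proof (rule Bochner_Integration.integrable_bound[OF d(2)])
    show "(\<lambda>z. f' z * F z ^ n * f z) \<in> borel_measurable lborel" by measurable
    show "AE z in lborel. norm (f' z * F z ^ n * f z) \<le> norm (h z)"
    proof (rule AE_I2)
      fix z
      have h0: "0 \<le> h z" using d(3)[of 0 z] d(1)
        by (smt (verit) abs_ge_zero f_nonneg mult_nonneg_nonneg)
      have "\<bar>f' z * F z ^ n * f z\<bar> = (\<bar>f' z\<bar> * f z) * F z ^ n"
        by (simp add: abs_mult f_nonneg F_nonneg)
      also have "\<dots> \<le> h z * 1"
        using d(3)[of 0 z] d(1) F_nonneg F_le1 h0
        by (intro mult_mono power_le_one) (auto simp: f_nonneg)
      finally show "norm (f' z * F z ^ n * f z) \<le> norm (h z)" by simp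
    qed
  qed
qed

lemma int_ffF: "integrable lborel (\<lambda>z. f z * f z * F z ^ n * f z)"
proof (rule Bochner_Integration.integrable_bound[where f="\<lambda>z. Mf * Mf * f z"])
  show "integrable lborel (\<lambda>z. Mf * Mf * f z)" using f_int by simp
  show "(\<lambda>z. f z * f z * F z ^ n * f z) \<in> borel_measurable lborel" by measurable
  show "AE z in lborel. norm (f z * f z * F z ^ n * f z) \<le> norm (Mf * Mf * f z)"
  proof (rule AE_I2)
    fix z
    have "f z * f z * F z ^ n * f z \<le> Mf * Mf * 1 * f z"
      using F_nonneg F_le1 Mf
      by (intro mult_mono mult_nonneg_nonneg power_le_one zero_le_power) (auto simp: f_nonneg)
    then show "norm (f z * f z * F z ^ n * f z) \<le> norm (Mf * Mf * f z)"
      using Mf(1) by (simp add: f_nonneg F_nonneg abs_mult)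
  qed
qed

lemma int_fF: "integrable lborel (\<lambda>z. f z * F z ^ n * f z)"
proof (rule Bochner_Integration.integrable_bound[where f="\<lambda>z. Mf * f z"])
  show "integrable lborel (\<lambda>z. Mf * f z)" using f_int by simp
  show "(\<lambda>z. f z * F z ^ n * f z) \<in> borel_measurable lborel" by measurable
  show "AE z in lborel. norm (f z * F z ^ n * f z) \<le> norm (Mf * f z)"
  proof (rule AE_I2)
    fix z
    have "f z * F z ^ n * f z \<le> Mf * 1 * f z"
      using F_nonneg F_le1 Mf
      by (intro mult_mono mult_nonneg_nonneg power_le_one zero_le_power) (auto simp: f_nonneg)
    then show "norm (f z * F z ^ n * f z) \<le> norm (Mf * f z)"
      using Mf(1) by (simp add: f_nonneg F_nonneg abs_mult)
  qed
qed

lemma I2: "2 * (LINT z|lborel. f' z * F z ^ n * f z) + real n * (LINT z|lborel. f z * f z * F z ^ (n - 1) * f z) = 0"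
proof -
  let ?G = "\<lambda>z. f z * f z * F z ^ n"
  let ?g = "\<lambda>z. 2 * (f' z * F z ^ n * f z) + real n * (f z * f z * F z ^ (n - 1) * f z)"
  have "(LBINT x=-\<infinity>..\<infinity>. ?g x) = 0 - 0"
  proof (rule interval_integral_FTC_integrable[where F="?G"])
    fix x
    have "(?G has_real_derivative ?g x) (at x)"
      by (rule derivative_eq_intros refl F_deriv f_deriv | simp)+
    then show "(?G has_vector_derivative ?g x) (at x)"
      by (simp add: has_real_derivative_iff_has_vector_derivative)
    show "isCont ?g x"
      by (intro continuous_intros F_isCont f_isCont f'_isCont)
  next
    show "set_integrable lborel (einterval (- \<infinity>) \<infinity>) ?g"
      using int_f'F[of n] int_ffF[of "n-1"] by (simp add: set_integrable_def)
    have "((\<lambda>z. f z * f z * F z ^ n) \<longlongrightarrow> 0) at_bot"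
    proof (rule Lim_null_comparison[OF _ tendsto_mult[OF f_bot f_bot, simplified]])
      show "\<forall>\<^sub>F x in at_bot. norm (f x * f x * F x ^ n) \<le> f x * f x"
        using F_nonneg F_le1 by (auto simp: abs_mult f_nonneg intro!: always_eventually mult_left_le power_le_one)
    qed
    then show "((?G \<circ> real_of_ereal) \<longlongrightarrow> 0) (at_right (- \<infinity>))"
      unfolding ereal_tendsto_simps1 .
    have "((\<lambda>z. f z * f z * F z ^ n) \<longlongrightarrow> 0) at_top"
    proof (rule Lim_null_comparison[OF _ tendsto_mult[OF f_top f_top, simplified]])
      show "\<forall>\<^sub>F x in at_top. norm (f x * f x * F x ^ n) \<le> f x * f x"
        using F_nonneg F_le1 by (auto simp: abs_mult f_nonneg intro!: always_eventually mult_left_le power_le_one)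
    qed
    then show "((?G \<circ> real_of_ereal) \<longlongrightarrow> 0) (at_left \<infinity>)"
      unfolding ereal_tendsto_simps1 .
  qed simp
  then have "(LINT x|lborel. ?g x) = 0" by (simp add: LBINT_UNIV)
  then show ?thesis
    using int_f'F[of n] int_ffF[of "n-1"] by simp
qed

end



context stdF begin

lemma pyS_line:
  fixes S :: "'n::finite set"
  shows "pyS F f S y (s *\<^sub>R axis i 1 + t *\<^sub>R axis j 1) =
    (LINT z|lborel. (\<Prod>u\<in>S-{y}. F (((if y = i then 1 else 0) - (if u = i then 1 else 0)) * s +
        ((if y = j then 1 else 0) - (if u = j then 1 else 0)) * t + z)) * f z)"
  unfolding pyS_def
  by (rule Bochner_Integration.integral_cong[OF refl], rule arg_cong2[where f=times, OF _ refl],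
      rule prod.cong[OF refl]) (simp add: axis_def algebra_simps)

lemma hess_entry:
  fixes S :: "'n::finite set" and y i j :: 'n
  defines "U \<equiv> S - {y}"
    and "\<alpha> \<equiv> \<lambda>u. (if y = i then 1 else 0) - (if u = i then 1 else 0) :: real"
    and "\<beta> \<equiv> \<lambda>u. (if y = j then 1 else 0) - (if u = j then 1 else 0) :: real"
  shows "hessian (\<lambda>\<theta>. - ln (pyS F f S y \<theta>)) 0 $ i $ j =
     - ((LINT z|lborel. (\<Sum>u\<in>U. f' z * \<alpha> u * \<beta> u * (\<Prod>v\<in>U-{u}. F z) +
         f z * \<beta> u * (\<Sum>v\<in>U-{u}. f z * \<alpha> v * (\<Prod>w\<in>U-{u}-{v}. F z))) * f z)
        * (LINT z|lborel. (\<Prod>u\<in>U. F z) * f z)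
      - (LINT z|lborel. (\<Sum>u\<in>U. f z * \<beta> u * (\<Prod>v\<in>U-{u}. F z)) * f z)
        * (LINT z|lborel. (\<Sum>u\<in>U. f z * \<alpha> u * (\<Prod>v\<in>U-{u}. F z)) * f z))
      / ((LINT z|lborel. (\<Prod>u\<in>U. F z) * f z) * (LINT z|lborel. (\<Prod>u\<in>U. F z) * f z))"
proof -
  have U: "finite U" unfolding U_def by simp
  define g where "g s t = (LINT z|lborel. (\<Prod>u\<in>U. F (\<alpha> u * s + \<beta> u * t + z)) * f z)" for s t
  define G1 where "G1 s = (LINT z|lborel. (\<Sum>u\<in>U. f (\<alpha> u * s + z) * \<beta> u * (\<Prod>v\<in>U-{u}. F (\<alpha> v * s + z))) * f z)" for s
  define g00 where "g00 = (LINT z|lborel. (\<Prod>u\<in>U. F z) * f z)"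
  define gs where "gs = (LINT z|lborel. (\<Sum>u\<in>U. f z * \<alpha> u * (\<Prod>v\<in>U-{u}. F z)) * f z)"
  define G1d where "G1d = (LINT z|lborel. (\<Sum>u\<in>U. f' z * \<alpha> u * \<beta> u * (\<Prod>v\<in>U-{u}. F z) +
         f z * \<beta> u * (\<Sum>v\<in>U-{u}. f z * \<alpha> v * (\<Prod>w\<in>U-{u}-{v}. F z))) * f z)"
  have line: "pyS F f S y (s *\<^sub>R axis i 1 + t *\<^sub>R axis j 1) = g s t" for s t
    unfolding g_def pyS_line U_def \<alpha>_def \<beta>_def ..
  have B1: "((\<lambda>t. g s t) has_real_derivative G1 s) (at 0)" for s
    using D1[OF U, of "\<lambda>u. \<alpha> u * s" \<beta> 0] unfolding g_def G1_def by simp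
  have gs0eq: "(\<lambda>s. g s 0) = (\<lambda>s. LINT z|lborel. (\<Prod>u\<in>U. F (0 + \<alpha> u * s + z)) * f z)"
    unfolding g_def by simp
  have B2: "((\<lambda>s. g s 0) has_real_derivative
     (LINT z|lborel. (\<Sum>u\<in>U. f (0 + \<alpha> u * s0 + z) * \<alpha> u * (\<Prod>v\<in>U-{u}. F (0 + \<alpha> v * s0 + z))) * f z)) (at s0)" for s0
    unfolding gs0eq by (rule D1[OF U])
  have B2': "((\<lambda>s. g s 0) has_real_derivative gs) (at 0)"
    using B2[of 0] unfolding gs_def by (simp add: mult.commute mult.left_commute)
  have g00: "g 0 0 = g00" unfolding g_def g00_def by simp
  have g00pos: "g00 > 0"
  proof -
    have "g00 = (LINT z|lborel. F z ^ card U * f z)" unfolding g00_def by simp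
    then show ?thesis using I1[of "card U"] by simp
  qed
  have cont: "isCont (\<lambda>s. g s 0) 0" using B2[of 0] by (rule DERIV_isCont)
  have ev: "eventually (\<lambda>s. g s 0 > 0) (nhds 0)"
  proof -
    have "eventually (\<lambda>s. g s 0 > 0) (at 0)"
      using cont g00pos g00 unfolding isCont_def by (auto intro: order_tendstoD)
    then show ?thesis using g00pos g00 unfolding eventually_at_filter
      by (auto elim: eventually_mono)
  qed
  have P1: "partial_deriv j (\<lambda>\<theta>. - ln (pyS F f S y \<theta>)) (0 + s *\<^sub>R axis i 1) = - (G1 s / g s 0)"
    if "g s 0 > 0" for s
  proof -
    have "((\<lambda>t. - ln (g s t)) has_real_derivative - (G1 s / g s 0)) (at 0)"
      using B1[of s] that by (auto intro!: derivative_eq_intros)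
    then show ?thesis unfolding partial_deriv_def by (simp add: line DERIV_imp_deriv)
  qed
  obtain \<delta> h where d: "\<delta> > 0" "integrable lborel h" "\<And>t z. \<bar>t\<bar> \<le> \<delta> \<Longrightarrow> \<bar>f' (t + z)\<bar> * f z \<le> h z"
    using dom by blast
  have \<alpha>b: "\<bar>\<alpha> u\<bar> \<le> 1" for u unfolding \<alpha>_def by auto
  have B3: "(G1 has_real_derivative G1d) (at 0)"
    unfolding G1_def G1d_def by (rule D2[OF U \<alpha>b d(1) d(2) d(3)])
  have G10: "G1 0 = (LINT z|lborel. (\<Sum>u\<in>U. f z * \<beta> u * (\<Prod>v\<in>U-{u}. F z)) * f z)"
    unfolding G1_def by simp
  have B4: "((\<lambda>s. - (G1 s / g s 0)) has_real_derivative - ((G1d * g00 - G1 0 * gs) / (g00 * g00))) (at 0)"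
  proof -
    have "((\<lambda>s. G1 s / g s 0) has_real_derivative (G1d * g 0 0 - G1 0 * gs) / (g 0 0 * g 0 0)) (at 0)"
      by (rule DERIV_divide[OF B3 B2']) (use g00 g00pos in simp)
    from DERIV_minus[OF this] show ?thesis by (simp add: g00)
  qed
  have B5: "((\<lambda>s. partial_deriv j (\<lambda>\<theta>. - ln (pyS F f S y \<theta>)) (0 + s *\<^sub>R axis i 1)) has_real_derivative
       - ((G1d * g00 - G1 0 * gs) / (g00 * g00))) (at 0)"
    by (rule DERIV_cong_ev[THEN iffD2, OF refl _ refl B4]) (use ev P1 in \<open>auto elim: eventually_mono\<close>)
  have "hessian (\<lambda>\<theta>. - ln (pyS F f S y \<theta>)) 0 $ i $ j
      = partial_deriv i (partial_deriv j (\<lambda>\<theta>. - ln (pyS F f S y \<theta>))) 0"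
    by (simp add: hessian_def)
  also have "\<dots> = deriv (\<lambda>s. partial_deriv j (\<lambda>\<theta>. - ln (pyS F f S y \<theta>)) (0 + s *\<^sub>R axis i 1)) 0"
    by (simp only: partial_deriv_def[of i])
  also have "\<dots> = - ((G1d * g00 - G1 0 * gs) / (g00 * g00))"
    by (rule DERIV_imp_deriv[OF B5])
  finally show ?thesis
    unfolding G10 G1d_def g00_def gs_def by (simp only: minus_divide_left)
qed

end



context stdF begin

lemma V1: "finite U \<Longrightarrow> (LINT z|lborel. (\<Prod>u\<in>U. F z) * f z) = 1 / (real (card U) + 1)"
  using I1[of "card U"] by simp

lemma V2:
  assumes U: "finite U"
  shows "(LINT z|lborel. (\<Sum>u\<in>U. f z * \<gamma> u * (\<Prod>v\<in>U-{u}. F z)) * f z)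
      = (\<Sum>u\<in>U. \<gamma> u) * (LINT z|lborel. f z * F z ^ (card U - 1) * f z)"
proof -
  have "(\<Sum>u\<in>U. f z * \<gamma> u * (\<Prod>v\<in>U-{u}. F z)) * f z = (\<Sum>u\<in>U. \<gamma> u) * (f z * F z ^ (card U - 1) * f z)" for z
  proof -
    have "(\<Sum>u\<in>U. f z * \<gamma> u * (\<Prod>v\<in>U-{u}. F z)) = (\<Sum>u\<in>U. \<gamma> u * (f z * F z ^ (card U - 1)))"
      using U by (intro sum.cong refl) (simp add: card_Diff_singleton)
    also have "\<dots> = (\<Sum>u\<in>U. \<gamma> u) * (f z * F z ^ (card U - 1))"
      by (rule sum_distrib_right[symmetric])
    finally show ?thesis by (simp only: mult.assoc)
  qed
  then show ?thesis by (simp only: integral_mult_right_zero)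
qed

lemma V3:
  assumes U: "finite U"
  shows "(LINT z|lborel. (\<Sum>u\<in>U. f' z * \<alpha> u * \<beta> u * (\<Prod>v\<in>U-{u}. F z) +
         f z * \<beta> u * (\<Sum>v\<in>U-{u}. f z * \<alpha> v * (\<Prod>w\<in>U-{u}-{v}. F z))) * f z)
    = (\<Sum>u\<in>U. \<alpha> u * \<beta> u) * (LINT z|lborel. f' z * F z ^ (card U - 1) * f z)
      + (\<Sum>u\<in>U. \<beta> u * (\<Sum>v\<in>U-{u}. \<alpha> v)) * (LINT z|lborel. f z * f z * F z ^ (card U - 1 - 1) * f z)"
proof -
  have "(\<Sum>u\<in>U. f' z * \<alpha> u * \<beta> u * (\<Prod>v\<in>U-{u}. F z) +
         f z * \<beta> u * (\<Sum>v\<in>U-{u}. f z * \<alpha> v * (\<Prod>w\<in>U-{u}-{v}. F z))) * f z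
     = (\<Sum>u\<in>U. \<alpha> u * \<beta> u) * (f' z * F z ^ (card U - 1) * f z)
      + (\<Sum>u\<in>U. \<beta> u * (\<Sum>v\<in>U-{u}. \<alpha> v)) * (f z * f z * F z ^ (card U - 1 - 1) * f z)" for z
  proof -
    have "(\<Sum>u\<in>U. f' z * \<alpha> u * \<beta> u * (\<Prod>v\<in>U-{u}. F z) +
         f z * \<beta> u * (\<Sum>v\<in>U-{u}. f z * \<alpha> v * (\<Prod>w\<in>U-{u}-{v}. F z)))
       = (\<Sum>u\<in>U. \<alpha> u * \<beta> u * (f' z * F z ^ (card U - 1)) +
          \<beta> u * (\<Sum>v\<in>U-{u}. \<alpha> v) * (f z * f z * F z ^ (card U - 1 - 1)))"
    proof (intro sum.cong refl)
      fix u assume u: "u \<in> U"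
      have "(\<Sum>v\<in>U-{u}. f z * \<alpha> v * (\<Prod>w\<in>U-{u}-{v}. F z)) = (\<Sum>v\<in>U-{u}. \<alpha> v * (f z * F z ^ (card U - 1 - 1)))"
        using U u by (intro sum.cong refl) (simp add: card_Diff_singleton)
      also have "\<dots> = (\<Sum>v\<in>U-{u}. \<alpha> v) * (f z * F z ^ (card U - 1 - 1))"
        by (rule sum_distrib_right[symmetric])
      finally have e: "(\<Sum>v\<in>U-{u}. f z * \<alpha> v * (\<Prod>w\<in>U-{u}-{v}. F z)) = (\<Sum>v\<in>U-{u}. \<alpha> v) * (f z * F z ^ (card U - 1 - 1))" .
      have e2: "(\<Prod>v\<in>U-{u}. F z) = F z ^ (card U - 1)" using U u by (simp add: card_Diff_singleton)
      show "f' z * \<alpha> u * \<beta> u * (\<Prod>v\<in>U-{u}. F z) +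
         f z * \<beta> u * (\<Sum>v\<in>U-{u}. f z * \<alpha> v * (\<Prod>w\<in>U-{u}-{v}. F z))
         = \<alpha> u * \<beta> u * (f' z * F z ^ (card U - 1)) +
          \<beta> u * (\<Sum>v\<in>U-{u}. \<alpha> v) * (f z * f z * F z ^ (card U - 1 - 1))"
        unfolding e e2 by (simp only: mult_ac)
    qed
    also have "\<dots> = (\<Sum>u\<in>U. \<alpha> u * \<beta> u) * (f' z * F z ^ (card U - 1)) +
        (\<Sum>u\<in>U. \<beta> u * (\<Sum>v\<in>U-{u}. \<alpha> v)) * (f z * f z * F z ^ (card U - 1 - 1))"
      by (simp only: sum.distrib sum_distrib_right[symmetric])
    finally show ?thesis by (simp only: distrib_right mult.assoc)
  qed
  then show ?thesis using int_f'F int_ffF by simp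
qed

lemma hess_formula:
  fixes S :: "'n::finite set" and y i j :: 'n
  defines "U \<equiv> S - {y}"
    and "\<alpha> \<equiv> \<lambda>u. (if y = i then 1 else 0) - (if u = i then 1 else 0) :: real"
    and "\<beta> \<equiv> \<lambda>u. (if y = j then 1 else 0) - (if u = j then 1 else 0) :: real"
  shows "hessian (\<lambda>\<theta>. - ln (pyS F f S y \<theta>)) 0 $ i $ j =
     - (real (card U) + 1) * ((\<Sum>u\<in>U. \<alpha> u * \<beta> u) * (LINT z|lborel. f' z * F z ^ (card U - 1) * f z)
      + (\<Sum>u\<in>U. \<beta> u * (\<Sum>v\<in>U-{u}. \<alpha> v)) * (LINT z|lborel. f z * f z * F z ^ (card U - 1 - 1) * f z))
     + (real (card U) + 1)\<^sup>2 * (LINT z|lborel. f z * F z ^ (card U - 1) * f z)\<^sup>2 * (\<Sum>u\<in>U. \<alpha> u) * (\<Sum>u\<in>U. \<beta> u)"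
proof -
  have U: "finite U" unfolding U_def by simp
  have alg: "- (X * (1 / K) - (sb * a) * (sa * a)) / ((1 / K) * (1 / K)) = - K * X + K\<^sup>2 * a\<^sup>2 * sa * sb"
    if "K > 0" for X K sa sb a :: real
    using that by (simp add: field_simps power2_eq_square)
  have U': "finite (S - {y})" by simp
  show ?thesis
    unfolding \<alpha>_def \<beta>_def U_def hess_entry[of S y i j] V1[OF U'] V2[OF U'] V3[OF U']
    by (rule alg) simp
qed

end



lemma norm_vec_sq: "(norm (x :: real^'n))\<^sup>2 = (\<Sum>i\<in>UNIV. (x$i)\<^sup>2)"
  by (simp add: norm_vec_def L2_set_def sum_nonneg)

lemma spec_norm_le_frob:
  fixes A :: "real^'n::finite^'m::finite"
  shows "spec_norm A \<le> sqrt (\<Sum>i\<in>UNIV. \<Sum>j\<in>UNIV. (A$i$j)\<^sup>2)"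
  unfolding spec_norm_def
proof (rule onorm_le)
  fix x :: "real^'n"
  let ?Q = "\<Sum>i\<in>UNIV. \<Sum>j\<in>UNIV. (A$i$j)\<^sup>2"
  have "(norm (A *v x))\<^sup>2 = (\<Sum>i\<in>UNIV. (\<Sum>j\<in>UNIV. A$i$j * x$j)\<^sup>2)"
    by (simp add: norm_vec_sq matrix_vector_mult_def)
  also have "\<dots> \<le> (\<Sum>i\<in>UNIV. (\<Sum>j\<in>UNIV. (A$i$j)\<^sup>2) * (\<Sum>j\<in>UNIV. (x$j)\<^sup>2))"
    by (intro sum_mono Cauchy_Schwarz_ineq_sum)
  also have "\<dots> = ?Q * (norm x)\<^sup>2"
    by (simp add: norm_vec_sq sum_distrib_right)
  also have "\<dots> = (sqrt ?Q * norm x)\<^sup>2"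
    by (simp add: power_mult_distrib sum_nonneg)
  finally show "norm (A *v x) \<le> sqrt ?Q * norm x"
    by (rule power2_le_imp_le) (simp add: sum_nonneg)
qed

lemma final_ineq:
  fixes m A B :: real
  assumes m: "m = 1 \<or> m \<ge> 2" and A: "A \<ge> 0" and B: "B \<ge> 0"
    and c: "(m - 1) * B / 2 \<le> m * A"
  shows "(m * A - (m - 1) * B / 2)\<^sup>2 + (m - 1) * B\<^sup>2 / 4 \<le> (m + 1)\<^sup>2 * A\<^sup>2"
proof (cases "m = 1")
  case True
  then show ?thesis using A by (simp add: power2_eq_square mult_mono)
next
  case False
  then have m2: "m \<ge> 2" using m by simp
  define X where "X = (m - 1) * B / 2"
  have X0: "X \<ge> 0" using B m2 by (simp add: X_def)
  have "m * A \<le> (2 * (m - 1)) * A" using m2 A by (intro mult_right_mono) auto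
  then have Xle: "X \<le> 2 * (m - 1) * A" using c unfolding X_def by linarith
  have B': "B = 2 * X / (m - 1)" using m2 by (simp add: X_def)
  have key: "(m - 1) * ((m * A - X)\<^sup>2 - m\<^sup>2 * A\<^sup>2) + X\<^sup>2 = m * X * (X - 2 * (m - 1) * A)"
    by (simp add: power2_eq_square algebra_simps)
  have "m * X * (X - 2 * (m - 1) * A) \<le> 0"
    using X0 Xle m2 by (intro mult_nonneg_nonpos) auto
  then have "(m - 1) * ((m * A - X)\<^sup>2 - m\<^sup>2 * A\<^sup>2) + X\<^sup>2 \<le> 0" using key by simp
  then have "X\<^sup>2 \<le> (m - 1) * (m\<^sup>2 * A\<^sup>2 - (m * A - X)\<^sup>2)"
    by (simp add: algebra_simps)
  then have "X\<^sup>2 / (m - 1) \<le> m\<^sup>2 * A\<^sup>2 - (m * A - X)\<^sup>2"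
    using m2 by (simp add: divide_le_eq mult.commute)
  then have "(m * A - X)\<^sup>2 + X\<^sup>2 / (m - 1) \<le> m\<^sup>2 * A\<^sup>2" by simp
  moreover have "(m - 1) * B\<^sup>2 / 4 = X\<^sup>2 / (m - 1)"
    using m2 by (simp add: X_def power2_eq_square field_simps)
  moreover have "m\<^sup>2 * A\<^sup>2 \<le> (m + 1)\<^sup>2 * A\<^sup>2"
    using m A by (intro mult_right_mono power_mono) auto
  ultimately show ?thesis unfolding X_def by linarith
qed




context stdF begin

lemma dpk0_val:
  assumes k: "k \<ge> 2"
  shows "dpk0 F f k = (LINT z|lborel. f z * F z ^ (k - 2) * f z)"
proof -
  define U where "U = {1..k-1}"
  define \<beta> where "\<beta> v = (if v = (1::nat) then 1 else 0 :: real)" for v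
  have U: "finite U" unfolding U_def by simp
  have eq: "(\<lambda>t. pk F f k (\<lambda>v. if v = 1 then t else 0)) =
        (\<lambda>t. LINT z|lborel. (\<Prod>u\<in>U. F ((\<lambda>_. 0) u + \<beta> u * t + z)) * f z)"
    unfolding pk_def U_def \<beta>_def
    by (intro ext Bochner_Integration.integral_cong[OF refl] arg_cong2[where f=times, OF _ refl] prod.cong) auto
  have "((\<lambda>t. pk F f k (\<lambda>v. if v = 1 then t else 0)) has_real_derivative
     (LINT z|lborel. (\<Sum>u\<in>U. f (0 + \<beta> u * 0 + z) * \<beta> u * (\<Prod>v\<in>U-{u}. F (0 + \<beta> v * 0 + z))) * f z)) (at 0)"
    unfolding eq by (rule D1[OF U])
  moreover have "(LINT z|lborel. (\<Sum>u\<in>U. f (0 + \<beta> u * 0 + z) * \<beta> u * (\<Prod>v\<in>U-{u}. F (0 + \<beta> v * 0 + z))) * f z)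
      = (\<Sum>u\<in>U. \<beta> u) * (LINT z|lborel. f z * F z ^ (card U - 1) * f z)"
    using V2[OF U, of \<beta>] by simp
  moreover have "(\<Sum>u\<in>U. \<beta> u) = 1" unfolding U_def \<beta>_def using k by simp
  moreover have "card U - 1 = k - 2" unfolding U_def by simp
  ultimately show ?thesis unfolding dpk0_def by (simp add: DERIV_imp_deriv)
qed

end




theorem mainTheorem18:
  fixes F f f' :: "real \<Rightarrow> real" and S :: "'n::finite set"
  assumes std: "std_assumptions F f f'"
    and k2: "card S \<ge> 2"
    and neg: "\<forall>v\<in>S. \<forall>i j. i \<noteq> j \<longrightarrow>
               hessian (\<lambda>\<theta>. - ln (pyS F f S v \<theta>)) 0 $ i $ j \<le> 0"
  shows "\<forall>y\<in>S. spec_norm (hessian (\<lambda>\<theta>. - ln (pyS F f S y \<theta>)) 0)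
                \<le> real (card S) ^ 4 * (dpk0 F f (card S))\<^sup>2"
proof (intro ballI)
  fix y assume yS: "y \<in> S"
  interpret stdF F f f' by (rule stdF.intro[OF std])
  define U where "U = S - {y}"
  have finU: "finite U" unfolding U_def by simp
  have yU: "y \<notin> U" unfolding U_def by simp
  have S_eq: "S = insert y U" unfolding U_def using yS by auto
  have cardS: "card S = card U + 1" using S_eq finU yU by simp
  have cU1: "card U \<ge> 1" using cardS k2 by simp
  define m where "m = real (card U)"
  have m1: "m = 1 \<or> m \<ge> 2" unfolding m_def using cU1 by (cases "card U = 1") auto
  define a where "a = (LINT z|lborel. f z * F z ^ (card U - 1) * f z)"
  define c where "c = (LINT z|lborel. f' z * F z ^ (card U - 1) * f z)"
  define b where "b = (LINT z|lborel. f z * f z * F z ^ (card U - 1 - 1) * f z)"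
  have cb0: "2 * c + (m - 1) * b = 0"
    using I2[of "card U - 1"] cU1 unfolding c_def b_def m_def by (simp add: of_nat_diff)
  have cb: "c = - (m - 1) * b / 2"
    using cb0 by (simp add: field_simps)
  have b0: "b \<ge> 0" unfolding b_def
    by (rule integral_nonneg_AE) (auto simp: f_nonneg F_nonneg)
  define k where "k = m + 1"
  define A where "A = k\<^sup>2 * a\<^sup>2"
  define B where "B = k * b"
  have A0: "A \<ge> 0" unfolding A_def by simp
  have B0: "B \<ge> 0" unfolding B_def k_def m_def using b0 by simp
  define val where "val i j = hessian (\<lambda>\<theta>. - ln (pyS F f S y \<theta>)) 0 $ i $ j" for i j
  define \<sigma> where "\<sigma> i = (\<Sum>u\<in>U. (if y = i then 1 else 0) - (if u = i then 1 else 0) :: real)" for i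
  define P where "P i j = (\<Sum>u\<in>U. ((if y = i then 1 else 0) - (if u = i then 1 else 0)) *
        ((if y = j then 1 else 0) - (if u = j then 1 else 0)) :: real)" for i j
  have R: "(\<Sum>u\<in>U. ((if y = j then 1 else 0) - (if u = j then 1 else 0)) *
        (\<Sum>v\<in>U-{u}. (if y = i then 1 else 0) - (if v = i then 1 else 0) :: real)) = \<sigma> i * \<sigma> j - P i j" for i j
  proof -
    have "(\<Sum>u\<in>U. ((if y = j then 1 else 0) - (if u = j then 1 else 0)) *
        (\<Sum>v\<in>U-{u}. (if y = i then 1 else 0) - (if v = i then 1 else 0) :: real))
       = (\<Sum>u\<in>U. ((if y = j then 1 else 0) - (if u = j then 1 else 0)) *
        (\<sigma> i - ((if y = i then 1 else 0) - (if u = i then 1 else 0))))"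
      unfolding \<sigma>_def by (intro sum.cong refl) (simp add: sum_diff1 finU)
    also have "\<dots> = \<sigma> i * \<sigma> j - P i j"
      unfolding P_def \<sigma>_def[of j]
      using finU by (simp add: right_diff_distrib sum_subtractf sum_distrib_left sum_distrib_right mult.commute
          if_distrib[where f="\<lambda>x. _ * x"] cong: if_cong)
    finally show ?thesis .
  qed
  have vform: "val i j = (k * B / 2) * P i j + (A - B) * \<sigma> i * \<sigma> j" for i j
    unfolding val_def hess_formula[of S y i j, folded U_def] R
    unfolding c_def[symmetric] b_def[symmetric] a_def[symmetric] \<sigma>_def[symmetric] P_def[symmetric] cb
    unfolding m_def[symmetric] A_def B_def k_def
    by (simp add: power2_eq_square field_simps)
  have \<sigma>v: "\<sigma> i = (if y = i then m else 0) - (if i \<in> U then 1 else 0)" for i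
    unfolding \<sigma>_def m_def by (simp add: sum_subtractf finU)
  show "spec_norm (hessian (\<lambda>\<theta>. - ln (pyS F f S y \<theta>)) 0)
                \<le> real (card S) ^ 4 * (dpk0 F f (card S))\<^sup>2"
  proof -
    have notU: "i \<notin> U \<Longrightarrow> i \<noteq> y \<Longrightarrow> i \<notin> S" for i using S_eq by auto
    have Pyy: "P y y = m"
    proof -
      have "P y y = (\<Sum>u\<in>U. 1)" unfolding P_def by (rule sum.cong) (use yU in auto)
      then show ?thesis by (simp add: m_def)
    qed
    have Pyu: "P y u0 = -1" "P u0 y = -1" if "u0 \<in> U" for u0
    proof -
      have ne: "y \<noteq> u0" using that yU by auto
      have "P y u0 = (\<Sum>u\<in>U. - (if u = u0 then 1 else 0))" unfolding P_def
        by (rule sum.cong) (use yU ne in auto)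
      then show "P y u0 = -1" using that finU by (simp add: sum_negf)
      have "P u0 y = (\<Sum>u\<in>U. - (if u = u0 then 1 else 0))" unfolding P_def
        by (rule sum.cong) (use yU ne in auto)
      then show "P u0 y = -1" using that finU by (simp add: sum_negf)
    qed
    have Puu: "P u0 u0 = 1" if "u0 \<in> U" for u0
    proof -
      have ne: "y \<noteq> u0" using that yU by auto
      have "P u0 u0 = (\<Sum>u\<in>U. (if u = u0 then 1 else 0))" unfolding P_def
        by (rule sum.cong) (use yU ne in auto)
      then show ?thesis using that finU by simp
    qed
    have Puw: "P u0 w0 = 0" if "u0 \<in> U" "w0 \<in> U" "u0 \<noteq> w0" for u0 w0
    proof -
      have "P u0 w0 = (\<Sum>u\<in>U. 0)" unfolding P_def
        by (rule sum.cong) (use yU that in auto)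
      then show ?thesis by simp
    qed
    have P0: "P i j = 0" if "i \<notin> S \<or> j \<notin> S" for i j
    proof -
      have "P i j = (\<Sum>u\<in>U. 0)" unfolding P_def
        by (rule sum.cong) (use that S_eq in auto)
      then show ?thesis by simp
    qed
    have val0: "val i j = 0" if "i \<notin> S \<or> j \<notin> S" for i j
      using that P0[OF that] S_eq by (auto simp: vform \<sigma>v)
    have valyy: "val y y = (k * B / 2) * m + (A - B) * m * m"
      by (simp add: vform \<sigma>v Pyy yU)
    have valyu: "val y u0 = - (k * B / 2) - (A - B) * m" "val u0 y = - (k * B / 2) - (A - B) * m"
      if "u0 \<in> U" for u0
      using that yU Pyu[OF that] by (auto simp: vform \<sigma>v algebra_simps)
    have valuu: "val u0 u0 = k * B / 2 + (A - B)" if "u0 \<in> U" for u0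
      using that yU Puu[OF that] by (auto simp: vform \<sigma>v)
    have valuw: "val u0 w0 = A - B" if "u0 \<in> U" "w0 \<in> U" "u0 \<noteq> w0" for u0 w0
      using that yU Puw[OF that] by (auto simp: vform \<sigma>v)
    define v1 where "v1 = (k * B / 2) * m + (A - B) * m * m"
    define v2 where "v2 = - (k * B / 2) - (A - B) * m"
    define v3 where "v3 = k * B / 2 + (A - B)"
    define v4 where "v4 = A - B"
    obtain u0 where u0: "u0 \<in> U" using cU1 finU by (metis card.empty ex_in_conv not_one_le_zero)
    have "val u0 y \<le> 0" unfolding val_def using neg yS u0 yU U_def by auto
    then have v2le: "v2 \<le> 0" using valyu[OF u0] by (simp add: v2_def)
    have e: "- ((m + 1) * B / 2) - (A - B) * m = ((m - 1) * B / 2) - m * A" by (simp add: field_simps)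
    have constr: "(m - 1) * B / 2 \<le> m * A" using v2le e unfolding v2_def k_def by linarith
    have rows: "(\<Sum>j\<in>UNIV. (val i j)\<^sup>2) = (\<Sum>j\<in>S. (val i j)\<^sup>2)" for i
      by (rule sum.mono_neutral_right) (auto simp: val0)
    have "(\<Sum>i\<in>UNIV. \<Sum>j\<in>UNIV. (val i j)\<^sup>2) = (\<Sum>i\<in>UNIV. \<Sum>j\<in>S. (val i j)\<^sup>2)"
      by (simp add: rows)
    also have "\<dots> = (\<Sum>i\<in>S. \<Sum>j\<in>S. (val i j)\<^sup>2)"
      by (rule sum.mono_neutral_right) (auto simp: val0)
    also have "\<dots> = (v1\<^sup>2 + m * v2\<^sup>2) + m * (v2\<^sup>2 + (v3\<^sup>2 + (m - 1) * v4\<^sup>2))"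
    proof -
      have r1: "(\<Sum>j\<in>S. (val y j)\<^sup>2) = v1\<^sup>2 + m * v2\<^sup>2"
      proof -
        have "(\<Sum>j\<in>U. (val y j)\<^sup>2) = (\<Sum>j\<in>U. v2\<^sup>2)"
          by (rule sum.cong) (auto simp: valyu v2_def)
        then show ?thesis unfolding S_eq using finU yU by (simp add: valyy v1_def m_def)
      qed
      have r2: "(\<Sum>j\<in>S. (val u j)\<^sup>2) = v2\<^sup>2 + (v3\<^sup>2 + (m - 1) * v4\<^sup>2)" if u: "u \<in> U" for u
      proof -
        have "(\<Sum>j\<in>U. (val u j)\<^sup>2) = (val u u)\<^sup>2 + (\<Sum>j\<in>U-{u}. (val u j)\<^sup>2)"
          using finU u by (simp add: sum.remove)
        also have "(\<Sum>j\<in>U-{u}. (val u j)\<^sup>2) = (\<Sum>j\<in>U-{u}. v4\<^sup>2)"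
          by (rule sum.cong) (use u in \<open>auto simp: valuw v4_def\<close>)
        also have "\<dots> = (m - 1) * v4\<^sup>2" using finU u cU1 by (simp add: m_def of_nat_diff)
        finally show ?thesis unfolding S_eq using finU yU u
          by (simp add: valyu valuu v2_def v3_def)
      qed
      have "(\<Sum>i\<in>U. \<Sum>j\<in>S. (val i j)\<^sup>2) = (\<Sum>i\<in>U. v2\<^sup>2 + (v3\<^sup>2 + (m - 1) * v4\<^sup>2))"
        by (rule sum.cong) (auto simp: r2)
      moreover have outer: "(\<Sum>i\<in>S. h i) = h y + (\<Sum>i\<in>U. h i)" for h :: "'n \<Rightarrow> real"
        using S_eq finU yU by simp
      ultimately show ?thesis using outer[of "\<lambda>i. \<Sum>j\<in>S. (val i j)\<^sup>2"] r1
        by (simp add: m_def)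
    qed
    also have "\<dots> = k\<^sup>2 * ((m * A - (m - 1) * B / 2)\<^sup>2 + (m - 1) * B\<^sup>2 / 4)"
      unfolding v1_def v2_def v3_def v4_def k_def by (simp add: power2_eq_square field_simps)
    also have "\<dots> \<le> k\<^sup>2 * ((m + 1)\<^sup>2 * A\<^sup>2)"
      by (intro mult_left_mono final_ineq m1 A0 B0 constr) simp
    also have "\<dots> = (k\<^sup>2 * A)\<^sup>2" unfolding k_def by (simp add: power2_eq_square)
    finally have frob: "(\<Sum>i\<in>UNIV. \<Sum>j\<in>UNIV. (val i j)\<^sup>2) \<le> (k\<^sup>2 * A)\<^sup>2" .
    have "spec_norm (hessian (\<lambda>\<theta>. - ln (pyS F f S y \<theta>)) 0) \<le> sqrt (\<Sum>i\<in>UNIV. \<Sum>j\<in>UNIV. (val i j)\<^sup>2)"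
      unfolding val_def by (rule spec_norm_le_frob)
    also have "\<dots> \<le> k\<^sup>2 * A"
    proof -
      have "sqrt (\<Sum>i\<in>UNIV. \<Sum>j\<in>UNIV. (val i j)\<^sup>2) \<le> sqrt ((k\<^sup>2 * A)\<^sup>2)"
        using frob by (rule real_sqrt_le_mono)
      also have "\<dots> = k\<^sup>2 * A" using A0 by simp
      finally show ?thesis .
    qed
    also have "\<dots> = real (card S) ^ 4 * (dpk0 F f (card S))\<^sup>2"
    proof -
      have "dpk0 F f (card S) = a" unfolding dpk0_val[OF k2] a_def using cardS by simp
      moreover have "real (card S) = k" unfolding k_def m_def cardS by simp
      ultimately show ?thesis unfolding A_def by (simp add: power2_eq_square power4_eq_xxxx)
    qed
    finally show ?thesis .
  qed
qed


end
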